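(* Let $c_r>0$, $c_e>0$, and let $\mu$ be a finite (nonnegative) measure on $\mathbb{R}$. For closed intervals $I,J\subseteq\mathbb{R}$ (range conditions on a fixed indexed attribute), define the merge function $M(I,J)$ to be the interval hull $I\oplus J=[\min(\inf I,\inf J),\max(\sup I,\sup J)]$ if $I\cap J\neq\emptyset$ and $\mu(I\cap J)\,(c_r+c_e)>c_e\,\mu(I\cup J)$, and $M(I,J)=\emptyset$ otherwise. Let $x,y,z$ be closed intervals such that $x\cap y\neq\emptyset$, $M(x,y)=\emptyset$, $M(y,z)\neq\emptyset$ (so the merged candidate $y\oplus z$ exists), and $x\cap z=\emptyset$. Then $M(x,y\oplus z)=\emptyset$.
   Context: Candidate guards are range conditions $a\in[v_1,v_2]$ on an indexed attribute $a$, identified with closed intervals. $\mu(S)$ denotes the estimated number of tuples whose value of $a$ lies in $S$. $c_r$ is the cost of reading a tuple and $c_e$ the cost of evaluating one policy's object conditions on a tuple. The function $M$ decides whether merging two overlapping candidate guards into their interval hull is beneficial, via the condition $\mu(I\cap J)/\mu(I\cup J)>c_e/(c_r+c_e)$ (written multiplicatively above). *)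

theory Defs
  imports "HOL-Analysis.Analysis"
begin

definition ihull :: "real set \<Rightarrow> real set \<Rightarrow> real set" where
  "ihull I J = {min (Inf I) (Inf J) .. max (Sup I) (Sup J)}"

definition merge :: "real measure \<Rightarrow> real \<Rightarrow> real \<Rightarrow> real set \<Rightarrow> real set \<Rightarrow> real set" where
  "merge mu cr ce I J =
     (if I \<inter> J \<noteq> {} \<and> measure mu (I \<inter> J) * (cr + ce) > ce * measure mu (I \<union> J)
      then ihull I J else {})"

end

theory Submission
  imports Defs
begin

theorem corollary1:
  fixes mu :: "real measure" and cr ce :: real
    and x y z :: "real set" and x1 x2 y1 y2 z1 z2 :: real
  assumes "finite_measure mu" and "sets mu = sets borel"
    and "cr > 0" and "ce > 0"
    and "x = {x1..x2}" and "y = {y1..y2}" and "z = {z1..z2}"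
    and "x \<inter> y \<noteq> {}"
    and "merge mu cr ce x y = {}"
    and "merge mu cr ce y z \<noteq> {}"
    and "x \<inter> z = {}"
  shows "merge mu cr ce x (ihull y z) = {}"
proof -
  interpret finite_measure mu by fact
  have yz: "y \<inter> z \<noteq> {}" using assms(10) unfolding merge_def by (auto split: if_splits)
  have le: "y1 \<le> y2" "z1 \<le> z2" "x1 \<le> x2" using yz assms(5,6,7,8) by auto
  have hxy: "ihull x y \<noteq> {}" using le assms(5,6) by (auto simp: ihull_def)
  have xy: "\<not> measure mu (x \<inter> y) * (cr + ce) > ce * measure mu (x \<union> y)"
    using assms(8,9) hxy unfolding merge_def by (auto split: if_splits)
  have H: "ihull y z = {min y1 z1 .. max y2 z2}"
    using le assms(6,7) by (simp add: ihull_def)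
  have Hsub: "ihull y z \<subseteq> y \<union> z" using H yz assms(6,7) by auto
  have ysub: "y \<subseteq> ihull y z" using H assms(6) by auto
  have eq: "x \<inter> ihull y z = x \<inter> y" using Hsub ysub assms(11) by blast
  have mono: "measure mu (x \<union> y) \<le> measure mu (x \<union> ihull y z)"
    apply (rule finite_measure_mono)
    using ysub apply blast
    using assms(2,5) H by (simp add: sets.Un)
  have "measure mu (x \<inter> ihull y z) * (cr + ce) \<le> ce * measure mu (x \<union> ihull y z)"
    using xy eq mono assms(4) by (smt (verit) mult_left_mono)
  then show ?thesis unfolding merge_def by auto
qed

end
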